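(* Let $p,q$ be integers with $1+|p|<|q|$ and $\gcd(p,q)=1$. Then for every nonzero integer $m$, neither $\psi_{p,q}^{-1}(\langle m\xi\rangle)$ nor $\psi_{p,q}^{-1}(\langle m\eta\rangle)$ is a regular language. More generally, for any $\zeta\in\mathbb{Z}^2$ and integer $m>1$, if $\psi_{p,q}^{-1}(\langle\zeta\rangle)$ is not regular then $\psi_{p,q}^{-1}(\langle m\zeta\rangle)$ is not regular.
   Context: Let $p,q$ be integers with $1+|p|<|q|$ and $t(x)=x^2+px-q$. For $f,g\in\mathbb{Z}[x]$ write $f\sim g$ if $t$ divides $f-g$; identify $\mathbb{Z}^2$ with the additive group of $\mathbb{Z}[x]/\langle t\rangle$ via $(h_1,h_2)\mapsto[h_1x+h_2]_\sim$, and put $\eta=[x]_\sim$, $\xi=[1]_\sim$. Let $\Sigma_q=\{-(|q|-1),\dots,|q|-1\}$ with the order $-(|q|-1)<\dots<|q|-1$; a string $a_0a_1\dots a_n\in\Sigma_q^*$ represents the polynomial $a_nx^n+\dots+a_1x+a_0$, and two strings are equivalent if their polynomials are $\sim$-equivalent. $\mathrm{Dom}_{p,q}$ is the set of $w\in\Sigma_q^*$ such that no string strictly smaller than $w$ in the length-lexicographic order on $\Sigma_q^*$ is equivalent to $w$, and $\psi_{p,q}:\mathrm{Dom}_{p,q}\to\mathbb{Z}^2$ sends $w$ to the $\sim$-class of the polynomial it represents. *)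

theory Defs
  imports "HOL-Computational_Algebra.Polynomial"
begin

definition tpoly :: "int \<Rightarrow> int \<Rightarrow> int poly" where
  "tpoly p q = [:-q, p, 1:]"

definition peq :: "int \<Rightarrow> int \<Rightarrow> int poly \<Rightarrow> int poly \<Rightarrow> bool" where
  "peq p q f g \<longleftrightarrow> tpoly p q dvd (f - g)"

definition Sigma :: "int \<Rightarrow> int set" where
  "Sigma q = {-(\<bar>q\<bar> - 1) .. \<bar>q\<bar> - 1}"

(* the string a0 a1 ... an represents a_n x^n + ... + a_1 x + a_0 *)
definition strpoly :: "int list \<Rightarrow> int poly" where
  "strpoly w = Poly w"

definition str_equiv :: "int \<Rightarrow> int \<Rightarrow> int list \<Rightarrow> int list \<Rightarrow> bool" where
  "str_equiv p q v w \<longleftrightarrow> peq p q (strpoly v) (strpoly w)"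

definition llex_less :: "int list \<Rightarrow> int list \<Rightarrow> bool" where
  "llex_less v w \<longleftrightarrow> length v < length w \<or>
     (length v = length w \<and> (v, w) \<in> lexord {(a, b). a < b})"

definition Dom :: "int \<Rightarrow> int \<Rightarrow> int list set" where
  "Dom p q = {w \<in> lists (Sigma q).
      \<not> (\<exists>v \<in> lists (Sigma q). llex_less v w \<and> str_equiv p q v w)}"

(* identification of Z^2 with Z[x]/<t>: (h1,h2) <-> [h1 x + h2] *)
definition psi :: "int \<Rightarrow> int \<Rightarrow> int list \<Rightarrow> int \<times> int" where
  "psi p q w = (THE h. peq p q (strpoly w) [:snd h, fst h:])"

definition eta :: "int \<times> int" where "eta = (1, 0)"
definition xi :: "int \<times> int" where "xi = (0, 1)"

definition zscale :: "int \<Rightarrow> int \<times> int \<Rightarrow> int \<times> int" where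
  "zscale m z = (m * fst z, m * snd z)"

definition cyc :: "int \<times> int \<Rightarrow> (int \<times> int) set" where
  "cyc z = {zscale k z | k. True}"

definition psi_preimage :: "int \<Rightarrow> int \<Rightarrow> (int \<times> int) set \<Rightarrow> int list set" where
  "psi_preimage p q S = {w \<in> Dom p q. psi p q w \<in> S}"

definition regular_lang :: "'a set \<Rightarrow> 'a list set \<Rightarrow> bool" where
  "regular_lang A L \<longleftrightarrow> L \<subseteq> lists A \<and>
     (\<exists>(Q :: nat set) (\<delta> :: nat \<Rightarrow> 'a \<Rightarrow> nat) s F.
        finite Q \<and> s \<in> Q \<and> F \<subseteq> Q \<and> (\<forall>x\<in>Q. \<forall>a\<in>A. \<delta> x a \<in> Q) \<and>
        L = {w \<in> lists A. foldl \<delta> s w \<in> F})"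

end

theory Submission
  imports Defs
begin


lemma peq_iff: "peq p q f g \<longleftrightarrow> (\<exists>h. f = g + tpoly p q * h)"
  unfolding peq_def dvd_def by (auto simp: algebra_simps)

lemma peq_refl[simp]: "peq p q f f" by (simp add: peq_def)
lemma peq_sym: "peq p q f g \<Longrightarrow> peq p q g f"
  unfolding peq_def using dvd_minus_iff[of "tpoly p q" "f - g"] by simp
lemma peq_trans: "peq p q f g \<Longrightarrow> peq p q g h \<Longrightarrow> peq p q f h"
proof -
  assume "peq p q f g" "peq p q g h"
  then have "tpoly p q dvd (f - g) + (g - h)" unfolding peq_def by (rule dvd_add)
  then show ?thesis unfolding peq_def by simp
qed
lemma peq_add: "peq p q f g \<Longrightarrow> peq p q f' g' \<Longrightarrow> peq p q (f + f') (g + g')"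
proof -
  assume "peq p q f g" "peq p q f' g'"
  then have "tpoly p q dvd (f - g) + (f' - g')" unfolding peq_def by (rule dvd_add)
  then show ?thesis unfolding peq_def by (simp add: algebra_simps)
qed
lemma peq_mult: "peq p q f g \<Longrightarrow> peq p q (f * h) (g * h)"
proof -
  assume "peq p q f g"
  then have "tpoly p q dvd (f - g) * h" unfolding peq_def by (rule dvd_mult2)
  then show ?thesis unfolding peq_def by (simp add: algebra_simps)
qed
lemma peq_mult2: "peq p q f g \<Longrightarrow> peq p q f' g' \<Longrightarrow> peq p q (f * f') (g * g')"
proof -
  assume a: "peq p q f g" "peq p q f' g'"
  have "peq p q (f * f') (g * f')" using a(1) by (rule peq_mult)
  moreover have "peq p q (f' * g) (g' * g)" using a(2) by (rule peq_mult)
  ultimately show ?thesis by (simp add: mult.commute peq_trans)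
qed
lemma peq_power: "peq p q f g \<Longrightarrow> peq p q (f ^ n) (g ^ n)"
  by (induction n) (auto intro: peq_mult2)
lemma peq_t: "peq p q (tpoly p q * h + f) f"
  unfolding peq_def by simp

lemma tpoly_dvd_coeff0: "tpoly p q dvd f \<Longrightarrow> q dvd coeff f 0"
proof -
  assume "tpoly p q dvd f" then obtain h where "f = tpoly p q * h" by (auto simp: dvd_def)
  then show ?thesis by (simp add: tpoly_def coeff_mult_0)
qed

lemma tpoly_nz: "tpoly p q \<noteq> 0" by (simp add: tpoly_def)
lemma degree_tpoly: "degree (tpoly p q) = 2" by (simp add: tpoly_def)

lemma tpoly_dvd_lin: "tpoly p q dvd [:a, b:] \<Longrightarrow> a = 0 \<and> b = 0"
proof -
  assume "tpoly p q dvd [:a, b:]" then obtain h where h: "[:a, b:] = tpoly p q * h" by (auto simp: dvd_def)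
  show ?thesis
  proof (cases "h = 0")
    case True then show ?thesis using h by simp
  next
    case False
    then have "degree (tpoly p q * h) = 2 + degree h" using tpoly_nz degree_mult_eq degree_tpoly by metis
    moreover have "degree [:a, b:] \<le> 1" by simp
    ultimately show ?thesis using h by simp
  qed
qed

lemma peq_lin_unique: "peq p q [:a, b:] [:c, d:] \<Longrightarrow> a = c \<and> b = d"
  unfolding peq_def using tpoly_dvd_lin[of p q "a - c" "b - d"] by simp

lemma tpoly_dvd_x: "tpoly p q dvd [:0,1:] * g \<Longrightarrow> q \<noteq> 0 \<Longrightarrow> tpoly p q dvd g"
proof -
  assume a: "tpoly p q dvd [:0,1:] * g" and q: "q \<noteq> 0"
  then obtain h where h: "[:0,1:] * g = tpoly p q * h" by (auto simp: dvd_def)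
  obtain c h' where hc: "h = pCons c h'" by (cases h)
  have "coeff ([:0,1:] * g) 0 = 0" by simp
  then have "c = 0" using h hc q by (simp add: tpoly_def coeff_mult_0)
  then have "[:0,1:] * g = [:0,1:] * (tpoly p q * h')" using h hc
    by (simp add: algebra_simps)
  then have "g = tpoly p q * h'" by simp
  then show ?thesis by simp
qed

lemma peq_x_cancel: "peq p q ([:0,1:] * f) ([:0,1:] * g) \<Longrightarrow> q \<noteq> 0 \<Longrightarrow> peq p q f g"
  unfolding peq_def right_diff_distrib[symmetric] by (rule tpoly_dvd_x)

lemma x1: "[:0,1:] * f = pCons 0 (f::int poly)" by simp

lemma pCons_lin: "pCons c f = [:c:] + f * [:0,1::int:]"
proof -
  have "f * [:0,1:] = pCons 0 f" by (subst mult.commute) (rule x1)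
  then show ?thesis by simp
qed

lemma peq_ex_lin: "\<exists>a b. peq p q f [:a, b:]"
proof (induction f)
  case 0 then show ?case by (rule exI[of _ 0], rule exI[of _ 0]) simp
next
  case (pCons c f)
  then obtain a b where ab: "peq p q f [:a, b:]" by blast
  have "peq p q (pCons c f) (pCons c [:a, b:])"
    using peq_add[OF peq_refl[of p q "[:c:]"] peq_mult[OF ab, of "[:0,1:]"]]
    by (simp only: pCons_lin[of c f] pCons_lin[of c "[:a,b:]"])
  moreover have "peq p q (pCons c [:a, b:]) [:c + b * q, a - b * p:]"
  proof -
    have "pCons c [:a, b:] = tpoly p q * [:b:] + [:c + b * q, a - b * p:]"
      by (simp add: tpoly_def algebra_simps)
    then show ?thesis using peq_t by metis
  qed
  ultimately show ?case using peq_trans by blast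
qed

definition cls :: "int \<Rightarrow> int \<Rightarrow> int poly \<Rightarrow> int \<times> int" where
  "cls p q f = (THE h. peq p q f [:snd h, fst h:])"

lemma cls_eq: "peq p q f [:b, a:] \<Longrightarrow> cls p q f = (a, b)"
  unfolding cls_def
proof (rule the_equality)
  assume "peq p q f [:b, a:]" then show "peq p q f [:snd (a, b), fst (a, b):]" by simp
next
  fix h assume 1: "peq p q f [:b, a:]" and 2: "peq p q f [:snd h, fst h:]"
  then have "peq p q [:snd h, fst h:] [:b, a:]" using peq_sym peq_trans by blast
  then show "h = (a, b)" using peq_lin_unique by (cases h) auto
qed

lemma cls_peq: "peq p q f [:snd (cls p q f), fst (cls p q f):]"
proof -
  obtain a b where "peq p q f [:a, b:]" using peq_ex_lin by blast
  then show ?thesis using cls_eq by fastforce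
qed

lemma psi_cls: "psi p q w = cls p q (Poly w)"
  unfolding psi_def cls_def strpoly_def ..

lemma psi_eq: "peq p q (Poly w) [:b, a:] \<Longrightarrow> psi p q w = (a, b)"
  using psi_cls cls_eq by metis



lemma divstep: assumes "q \<noteq> (0::int)" shows "\<exists>r k. A = r + q * k \<and> \<bar>r\<bar> < \<bar>q\<bar> \<and> \<bar>q\<bar> * \<bar>k\<bar> \<le> \<bar>A\<bar>"
proof -
  define k0 where "k0 = \<bar>A\<bar> div \<bar>q\<bar>"
  define r0 where "r0 = \<bar>A\<bar> mod \<bar>q\<bar>"
  have qa: "\<bar>q\<bar> > 0" using assms by simp
  have e: "\<bar>A\<bar> = \<bar>q\<bar> * k0 + r0" unfolding k0_def r0_def by simp
  have r0: "0 \<le> r0" "r0 < \<bar>q\<bar>" unfolding r0_def using qa by auto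
  have k0: "0 \<le> k0" unfolding k0_def using qa by (simp add: div_int_pos_iff)
  have le: "\<bar>q\<bar> * k0 \<le> \<bar>A\<bar>" using e r0 by simp
  show ?thesis
  proof (cases "A \<ge> 0")
    case True
    show ?thesis
    proof (cases "q > 0")
      case True then show ?thesis using e r0 k0 le \<open>A \<ge> 0\<close> by (intro exI[of _ r0] exI[of _ k0]) auto
    next
      case False then show ?thesis using e r0 k0 le \<open>A \<ge> 0\<close> by (intro exI[of _ r0] exI[of _ "-k0"]) auto
    qed
  next
    case False
    show ?thesis
    proof (cases "q > 0")
      case True then show ?thesis using e r0 k0 le \<open>\<not> A \<ge> 0\<close> by (intro exI[of _ "-r0"] exI[of _ "-k0"]) auto
    next
      case False then show ?thesis using e r0 k0 le \<open>\<not> A \<ge> 0\<close> assms by (intro exI[of _ "-r0"] exI[of _ "k0"]) auto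
    qed
  qed
qed

lemma aux_lin: "(BB::int) \<ge> 1 \<Longrightarrow> X + 2*K \<le> BB + AA \<Longrightarrow> 2*(X+2*K)+1 < 2*(AA+2*BB)" by presburger

lemma Sigma_iff: "a \<in> Sigma q \<longleftrightarrow> \<bar>a\<bar> < \<bar>q\<bar>" unfolding Sigma_def by auto

lemma rep: assumes hpq: "1 + \<bar>p\<bar> < \<bar>q\<bar>"
  shows "\<exists>w \<in> lists (Sigma q). peq p q (Poly w) [:A, B:]"
proof (induction "nat (2*(\<bar>A\<bar>+2*\<bar>B\<bar>)) + (if B = 0 then 1 else 0)" arbitrary: A B rule: less_induct)
  case less
  show ?case
  proof (cases "\<bar>A\<bar> < \<bar>q\<bar> \<and> \<bar>B\<bar> < \<bar>q\<bar>")
    case True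
    then show ?thesis by (intro bexI[of _ "[A, B]"]) (auto simp: Sigma_iff)
  next
    case False
    have q0: "q \<noteq> 0" using hpq by auto
    obtain r k where rk: "A = r + q * k" "\<bar>r\<bar> < \<bar>q\<bar>" "\<bar>q\<bar> * \<bar>k\<bar> \<le> \<bar>A\<bar>" using divstep[OF q0] by blast
    have t1: "\<bar>B + p*k\<bar> \<le> \<bar>B\<bar> + \<bar>p\<bar>*\<bar>k\<bar>" by (metis abs_mult abs_triangle_ineq)
    have t2: "(\<bar>p\<bar> + 2) * \<bar>k\<bar> \<le> \<bar>q\<bar> * \<bar>k\<bar>" using hpq by (intro mult_right_mono) auto
    have V: "\<bar>B + p*k\<bar> + 2*\<bar>k\<bar> \<le> \<bar>B\<bar> + \<bar>A\<bar>" using t1 t2 rk(3) by (simp add: algebra_simps)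
    have lt: "nat (2*(\<bar>B + p*k\<bar>+2*\<bar>k\<bar>)) + (if k = 0 then 1 else 0) < nat (2*(\<bar>A\<bar>+2*\<bar>B\<bar>)) + (if B = 0 then 1 else 0)"
    proof (cases "B = 0")
      case True
      then have "\<bar>A\<bar> \<ge> \<bar>q\<bar>" using False by auto
      then have "k \<noteq> 0" using rk by auto
      then show ?thesis using V True by auto
    next
      case False
      then have "\<bar>B\<bar> \<ge> 1" by simp
      then have h: "2*(\<bar>B + p*k\<bar>+2*\<bar>k\<bar>) + 1 < 2*(\<bar>A\<bar>+2*\<bar>B\<bar>)" using aux_lin[OF _ V] \<open>\<bar>B\<bar> \<ge> 1\<close> by blast
      show ?thesis using False h by (cases "k = 0") (simp_all add: nat_add_distrib[symmetric])
    qed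
    obtain w where w: "w \<in> lists (Sigma q)" "peq p q (Poly w) [:B + p*k, k:]" using less(1)[OF lt] by blast
    have "peq p q (Poly (r # w)) (pCons r [:B + p*k, k:])"
      using peq_add[OF peq_refl[of p q "[:r:]"] peq_mult[OF w(2), of "[:0,1:]"]] by (simp add: mult.commute)
    moreover have "pCons r [:B + p*k, k:] = tpoly p q * [:k:] + [:A, B:]"
      using rk(1) by (simp add: tpoly_def algebra_simps)
    ultimately have "peq p q (Poly (r # w)) [:A, B:]" using peq_t peq_trans by metis
    then show ?thesis using w rk by (intro bexI[of _ "r # w"]) (auto simp: Sigma_iff)
  qed
qed

lemma llex_irrefl: "\<not> llex_less w w"
  unfolding llex_less_def using lexord_irreflexive[of "{(a,b). (a::int) < b}"] by auto

lemma llex_trans: "llex_less u v \<Longrightarrow> llex_less v w \<Longrightarrow> llex_less u w"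
  unfolding llex_less_def using lexord_trans[of u v "{(a,b). (a::int) < b}" w]
  by (auto simp: trans_def)

lemma str_equiv_sym: "str_equiv p q v w \<Longrightarrow> str_equiv p q w v"
  unfolding str_equiv_def using peq_sym by blast
lemma str_equiv_trans: "str_equiv p q u v \<Longrightarrow> str_equiv p q v w \<Longrightarrow> str_equiv p q u w"
  unfolding str_equiv_def using peq_trans by blast

lemma Dom_exists: assumes "w0 \<in> lists (Sigma q)" shows "\<exists>w \<in> Dom p q. str_equiv p q w w0"
proof -
  define E where "E = {v \<in> lists (Sigma q). length v \<le> length w0 \<and> str_equiv p q v w0}"
  define R where "R = {(v, u). v \<in> E \<and> u \<in> E \<and> llex_less v u}"
  have fS: "finite (Sigma q)" unfolding Sigma_def by simp
  have "finite E" unfolding E_def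
    by (rule finite_subset[OF _ finite_lists_length_le[OF fS, of "length w0"]]) auto
  moreover have "R \<subseteq> E \<times> E" unfolding R_def by auto
  ultimately have "finite R" using finite_subset by blast
  moreover have "trans R" unfolding R_def trans_def using llex_trans by blast
  moreover have "irrefl R" unfolding R_def irrefl_def using llex_irrefl by blast
  ultimately have "wf R" using finite_acyclic_wf acyclic_irrefl trancl_id by metis
  have "w0 \<in> E" unfolding E_def using assms by (simp add: str_equiv_def)
  obtain z where z: "z \<in> E" "\<And>y. (y, z) \<in> R \<Longrightarrow> y \<notin> E" using wfE_min[OF \<open>wf R\<close> \<open>w0 \<in> E\<close>] by blast
  have "z \<in> Dom p q"
    unfolding Dom_def
  proof (rule CollectI, rule conjI)
    show "z \<in> lists (Sigma q)" using z(1) E_def by auto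
  next
    show "\<not> (\<exists>v\<in>lists (Sigma q). llex_less v z \<and> str_equiv p q v z)"
    proof
    assume "\<exists>v\<in>lists (Sigma q). llex_less v z \<and> str_equiv p q v z"
    then obtain v where v: "v \<in> lists (Sigma q)" "llex_less v z" "str_equiv p q v z" by blast
    have "length v \<le> length z" using v(2) unfolding llex_less_def by auto
    moreover have "str_equiv p q z w0" "length z \<le> length w0" using z(1) unfolding E_def by auto
    moreover have "str_equiv p q v w0" using str_equiv_trans[OF v(3)] calculation(2) by blast
    ultimately have "length v \<le> length w0" "str_equiv p q v w0" by linarith+
    then have "v \<in> E" using v(1) unfolding E_def by blast
    moreover have "(v, z) \<in> R" using \<open>v \<in> E\<close> z(1) v(2) unfolding R_def by blast
    ultimately show False using z(2)[of v] by blast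
    qed
  qed
  then show ?thesis using z(1) E_def by auto
qed

lemma Nil_Dom: "[] \<in> Dom p q"
  unfolding Dom_def llex_less_def by auto

lemma Dom_zero: "w \<in> Dom p q \<Longrightarrow> peq p q (Poly w) 0 \<Longrightarrow> w = []"
  unfolding Dom_def
proof (rule ccontr)
  assume a: "w \<in> {w \<in> lists (Sigma q). \<not> (\<exists>v\<in>lists (Sigma q). llex_less v w \<and> str_equiv p q v w)}"
    "peq p q (Poly w) 0" "w \<noteq> []"
  have "llex_less [] w" using a(3) unfolding llex_less_def by auto
  moreover have "str_equiv p q [] w" using a(2) peq_sym unfolding str_equiv_def strpoly_def by auto
  ultimately show False using a(1) by auto
qed

lemma Dom_lists: "w \<in> Dom p q \<Longrightarrow> w \<in> lists (Sigma q)" unfolding Dom_def by auto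

lemma Dom_cons0: assumes hq: "q \<noteq> 0" and w: "w \<in> Dom p q" "w \<noteq> []" shows "0 # w \<in> Dom p q"
proof -
  have wl: "w \<in> lists (Sigma q)" using w Dom_lists by auto
  have zs: "0 \<in> Sigma q" unfolding Sigma_def using hq by simp
  show ?thesis unfolding Dom_def
  proof (rule CollectI, rule conjI)
    show "0 # w \<in> lists (Sigma q)" using zs wl by simp
  next
    show "\<not> (\<exists>v\<in>lists (Sigma q). llex_less v (0 # w) \<and> str_equiv p q v (0 # w))"
    proof
    assume "\<exists>v\<in>lists (Sigma q). llex_less v (0 # w) \<and> str_equiv p q v (0 # w)"
    then obtain v where v: "v \<in> lists (Sigma q)" "llex_less v (0 # w)" "str_equiv p q v (0 # w)" by blast
    have d: "tpoly p q dvd Poly v - [:0,1:] * Poly w" using v(3) unfolding str_equiv_def peq_def strpoly_def by simp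
    show False
    proof (cases v)
      case Nil
      then have "tpoly p q dvd - ([:0,1:] * Poly w)" using d by (simp only: Poly.simps(1) diff_0)
      then have "tpoly p q dvd [:0,1:] * Poly w" by (simp only: dvd_minus_iff)
      then have "tpoly p q dvd Poly w" using tpoly_dvd_x hq by blast
      then have "peq p q (Poly w) 0" by (simp add: peq_def)
      then show False using Dom_zero w by blast
    next
      case (Cons b v')
      have "q dvd b" using tpoly_dvd_coeff0[OF d] Cons by simp
      moreover have "\<bar>b\<bar> < \<bar>q\<bar>" using v(1) Cons Sigma_iff by auto
      ultimately have b0: "b = 0" using dvd_imp_le_int[of b q] by (cases "b = 0") auto
      then have "tpoly p q dvd [:0,1:] * (Poly v' - Poly w)" using d Cons by (simp add: algebra_simps)
      then have "tpoly p q dvd Poly v' - Poly w" using tpoly_dvd_x hq by blast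
      then have "str_equiv p q v' w" by (simp add: str_equiv_def peq_def strpoly_def)
      moreover have "llex_less v' w" using v(2) Cons b0 unfolding llex_less_def by auto
      moreover have "v' \<in> lists (Sigma q)" using v(1) Cons by auto
      ultimately show False using w(1) unfolding Dom_def by auto
    qed
    qed
  qed
qed

lemma Dom_rep0: assumes "q \<noteq> 0" "w \<in> Dom p q" "w \<noteq> []" shows "replicate n 0 @ w \<in> Dom p q"
  using assms by (induction n) (auto intro: Dom_cons0)

lemma Poly_rep0: "Poly (replicate n 0 @ w) = [:0,1:]^n * Poly w"
  by (induction n) auto

lemma xpow: assumes "P \<ge> 1"
  shows "\<exists>a b. peq p q ([:0,1:]^P) [:b, a:] \<and> q dvd b \<and> a mod q = ((-p)^(P-1)) mod q"
  using assms
proof (induction P rule: dec_induct)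
  case base then show ?case by (intro exI[of _ 1] exI[of _ 0]) simp
next
  case (step P)
  then obtain a b where ab: "peq p q ([:0,1:]^P) [:b, a:]" "q dvd b" "a mod q = ((-p)^(P-1)) mod q" by blast
  have "peq p q ([:0,1:]^Suc P) ([:0,1:] * [:b, a:])" using peq_mult[OF ab(1), of "[:0,1:]"] by (simp add: mult.commute)
  moreover have "[:0,1:] * [:b, a:] = tpoly p q * [:a:] + [:a * q, b - a * p:]" by (simp add: tpoly_def algebra_simps)
  ultimately have "peq p q ([:0,1:]^Suc P) [:a * q, b - a * p:]" using peq_t peq_trans by metis
  moreover have "(b - a*p) mod q = ((-p)^(Suc P - 1)) mod q"
  proof -
    obtain k where k: "b = q * k" using ab(2) by (auto simp: dvd_def)
    have "(b - a*p) mod q = (- (a*p) + k * q) mod q" using k by (simp add: algebra_simps)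
    also have "\<dots> = (- (a*p)) mod q" by (rule mod_mult_self1)
    also have "\<dots> = (- (a mod q * p)) mod q" by (metis mod_minus_eq mod_mult_left_eq)
    also have "\<dots> = (- ((-p)^(P-1) mod q * p)) mod q" using ab(3) by simp
    also have "\<dots> = (- ((-p)^(P-1) * p)) mod q" by (metis mod_minus_eq mod_mult_left_eq)
    also have "- ((-p)^(P-1) * p) = (-p)^(Suc P - 1)" using step(1)
      by (cases P) auto
    finally show ?thesis .
  qed
  ultimately show ?case by (intro exI[of _ "b - a*p"] exI[of _ "a*q"]) auto
qed



lemma foldl_closed: "(\<forall>x\<in>Q. \<forall>a\<in>A. \<delta> x a \<in> Q) \<Longrightarrow> x \<in> Q \<Longrightarrow> w \<in> lists A \<Longrightarrow> foldl \<delta> x w \<in> Q"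
  by (induction w arbitrary: x) auto

lemma pigeon: assumes "finite Q" "\<And>n. f n \<in> Q" shows "\<exists>i j. i < j \<and> f i = f (j::nat)"
proof -
  have "\<not> inj_on f {..card Q}"
  proof
    assume "inj_on f {..card Q}"
    then have "card (f ` {..card Q}) = card Q + 1" by (simp add: card_image)
    moreover have "card (f ` {..card Q}) \<le> card Q" using assms by (intro card_mono) auto
    ultimately show False by simp
  qed
  then obtain i j where "i \<noteq> j" "f i = f j" unfolding inj_on_def by blast
  then show ?thesis by (metis linorder_neqE_nat)
qed

lemma a_nz: assumes "a mod q = ((-p)^n) mod q" "gcd p q = 1" "\<bar>q\<bar> > 1" shows "(a::int) \<noteq> 0"
proof
  assume "a = 0"
  then have "q dvd (-p)^n" using assms(1) by (simp add: mod_eq_0_iff_dvd[symmetric])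
  moreover have "coprime q ((-p)^n)" using assms(2) by (simp add: coprime_iff_gcd_eq_1[symmetric] coprime_commute)
  ultimately have "is_unit q" using coprime_absorb_left[of q "(-p)^n"] by blast
  then show False using assms(3) by auto
qed

lemma xxp: "peq p q ([:0,1:]^n * [:p,1:]^n) [:q^n:]"
proof -
  have "peq p q ([:0,1:] * [:p,1:]) [:q:]"
  proof -
    have "[:0,1:] * [:p,1:] = tpoly p q * 1 + [:q:]" by (simp add: tpoly_def)
    then show ?thesis using peq_t by metis
  qed
  then have "peq p q (([:0,1:] * [:p,1:])^n) ([:q:]^n)" by (rule peq_power)
  then show ?thesis by (simp only: power_mult_distrib poly_const_pow)
qed

lemma lin_mult: "[:b, a:] * [:c0, c1:] = tpoly p q * [:a*c1:] + [:b*c0 + a*c1*q, a*c0 + b*c1 - a*c1*p:]"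
  by (simp add: tpoly_def algebra_simps)

lemma nonreg:
  assumes hpq: "1 + \<bar>p\<bar> < \<bar>q\<bar>" and g: "gcd p q = 1" and D: "q*z1^2 - z2^2 + p*z1*z2 \<noteq> 0"
  shows "\<not> regular_lang (Sigma q) (psi_preimage p q (cyc (z1, z2)))"
proof
  assume "regular_lang (Sigma q) (psi_preimage p q (cyc (z1, z2)))"
  then obtain Q :: "nat set" and \<delta> :: "nat \<Rightarrow> int \<Rightarrow> nat" and s F where A: "finite Q" "s \<in> Q" "F \<subseteq> Q" "\<forall>x\<in>Q. \<forall>a\<in>Sigma q. \<delta> x a \<in> Q"
    "psi_preimage p q (cyc (z1, z2)) = {w \<in> lists (Sigma q). foldl \<delta> s w \<in> F}"
    unfolding regular_lang_def by blast
  have q0: "q \<noteq> 0" using hpq by auto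
  have zS: "0 \<in> Sigma q" unfolding Sigma_def using q0 by simp
  define f where "f n = foldl \<delta> s (replicate n (0::int))" for n
  have rl: "replicate n 0 \<in> lists (Sigma q)" for n using zS by (induct n) auto
  have "f n \<in> Q" for n unfolding f_def using foldl_closed[OF A(4) A(2) rl] .
  then obtain n1 n2 where n12: "n1 < n2" "f n1 = f n2" using pigeon[OF A(1)] by blast
  define P where "P = n2 - n1"
  have P1: "P \<ge> 1" using n12 P_def by simp
  obtain a b where ab: "peq p q ([:0,1:]^P) [:b, a:]" "a mod q = ((-p)^(P-1)) mod q" using xpow[OF P1] by blast
  have a0: "a \<noteq> 0" using a_nz[OF ab(2) g] hpq by auto
  define Z where "Z = [:z2, z1:]"
  obtain A0 B0 where AB: "peq p q ([:p,1:]^n1 * Z) [:A0, B0:]" using peq_ex_lin by blast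
  obtain w0 where w0: "w0 \<in> lists (Sigma q)" "peq p q (Poly w0) [:A0, B0:]" using rep[OF hpq] by blast
  obtain w where w: "w \<in> Dom p q" "str_equiv p q w w0" using Dom_exists[OF w0(1)] by blast
  have wY: "peq p q (Poly w) ([:p,1:]^n1 * Z)"
    using w(2) w0(2) AB unfolding str_equiv_def strpoly_def by (meson peq_sym peq_trans)
  have H1: "peq p q ([:0,1:]^n1 * Poly w) [:q^n1 * z2, q^n1 * z1:]"
  proof -
    have "peq p q ([:0,1:]^n1 * Poly w) ([:0,1:]^n1 * ([:p,1:]^n1 * Z))"
      using peq_mult[OF wY, of "[:0,1:]^n1"] by (simp add: mult.commute)
    moreover have "peq p q ([:0,1:]^n1 * ([:p,1:]^n1 * Z)) ([:q^n1:] * Z)"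
      using peq_mult[OF xxp[of p q n1], of Z] by (simp add: mult.assoc)
    ultimately have "peq p q ([:0,1:]^n1 * Poly w) ([:q^n1:] * Z)" by (rule peq_trans)
    moreover have "[:q^n1:] * Z = [:q^n1 * z2, q^n1 * z1:]" unfolding Z_def by simp
    ultimately show ?thesis by simp
  qed
  have wne: "w \<noteq> []"
  proof
    assume "w = []"
    then have "peq p q [:0, 0:] [:q^n1 * z2, q^n1 * z1:]" using H1 by simp
    then have "0 = q^n1 * z2 \<and> 0 = q^n1 * z1" by (rule peq_lin_unique)
    then have "z1 = 0" "z2 = 0" using q0 by auto
    then show False using D by simp
  qed
  have "replicate n1 0 @ w \<in> psi_preimage p q (cyc (z1, z2))"
    unfolding psi_preimage_def cyc_def zscale_def
    using Dom_rep0[OF q0 w(1) wne] psi_eq[of p q "replicate n1 0 @ w"] H1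
    by (auto simp: Poly_rep0)
  then have "foldl \<delta> s (replicate n1 0 @ w) \<in> F" using A(5) by auto
  then have "foldl \<delta> s (replicate n2 0 @ w) \<in> F" using n12(2) unfolding f_def by simp
  moreover have "replicate n2 0 @ w \<in> lists (Sigma q)" using rl[of n2] Dom_lists[OF w(1)] by simp
  ultimately have "replicate n2 0 @ w \<in> psi_preimage p q (cyc (z1, z2))" using A(5) by auto
  then obtain k where k: "psi p q (replicate n2 0 @ w) = (k * z1, k * z2)"
    unfolding psi_preimage_def cyc_def zscale_def by auto
  define c0 where "c0 = q^n1 * z2"
  define c1 where "c1 = q^n1 * z1"
  have n2P: "n2 = P + n1" using n12 P_def by simp
  have e: "[:0,1:]^n2 * Poly w = [:0,1:]^P * ([:0,1:]^n1 * Poly w)"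
    by (simp only: n2P power_add mult.assoc)
  have m: "peq p q ([:0,1:]^P * ([:0,1:]^n1 * Poly w)) ([:b, a:] * [:c0, c1:])"
    using peq_mult2[OF ab(1) H1] unfolding c0_def c1_def .
  have pe: "peq p q (Poly (replicate n2 0 @ w)) ([:b, a:] * [:c0, c1:])"
    using m unfolding Poly_rep0 e .
  have "peq p q ([:b, a:] * [:c0, c1:]) [:b*c0 + a*c1*q, a*c0 + b*c1 - a*c1*p:]"
    unfolding lin_mult[of b a c0 c1 p q] by (rule peq_t)
  then have "peq p q (Poly (replicate n2 0 @ w)) [:b*c0 + a*c1*q, a*c0 + b*c1 - a*c1*p:]"
    using pe peq_trans by blast
  then have "psi p q (replicate n2 0 @ w) = (a*c0 + b*c1 - a*c1*p, b*c0 + a*c1*q)" by (rule psi_eq)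
  then have e1: "a*c0 + b*c1 - a*c1*p = k*z1" and e2: "b*c0 + a*c1*q = k*z2" using k by auto
  have "a * q^n1 * (q*z1^2 - z2^2 + p*z1*z2) = z1 * (b*c0 + a*c1*q) - z2 * (a*c0 + b*c1 - a*c1*p)"
    unfolding c0_def c1_def by (simp add: algebra_simps power2_eq_square)
  also have "\<dots> = 0" using e1 e2 by (simp add: algebra_simps)
  finally show False using a0 q0 D by simp
qed



lemma reg_intro:
  fixes \<delta> :: "'s \<Rightarrow> 'a \<Rightarrow> 's"
  assumes fin: "finite Q" and s: "s \<in> Q" and cl: "\<forall>x\<in>Q. \<forall>a\<in>A. \<delta> x a \<in> Q"
    and L: "L = {w \<in> lists A. foldl \<delta> s w \<in> F}"
  shows "regular_lang A L"
proof -
  obtain g :: "'s \<Rightarrow> nat" where g: "inj_on g Q" using finite_imp_inj_to_nat_seg[OF fin] by blast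
  define h where "h = inv_into Q g"
  define \<delta>' where "\<delta>' n a = g (\<delta> (h n) a)" for n a
  have hg: "x \<in> Q \<Longrightarrow> h (g x) = x" for x unfolding h_def using g by (simp add: inv_into_f_f)
  have fw: "x \<in> Q \<Longrightarrow> w \<in> lists A \<Longrightarrow> foldl \<delta>' (g x) w = g (foldl \<delta> x w)" for x w
    by (induction w arbitrary: x) (auto simp: \<delta>'_def hg cl)
  have inQ: "w \<in> lists A \<Longrightarrow> foldl \<delta> s w \<in> Q" for w using foldl_closed[OF cl s] by blast
  show ?thesis unfolding regular_lang_def
  proof (intro conjI exI)
    show "L \<subseteq> lists A" using L by auto
    show "finite (g ` Q)" using fin by simp
    show "g s \<in> g ` Q" using s by simp
    show "g ` (F \<inter> Q) \<subseteq> g ` Q" by auto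
    show "\<forall>x\<in>g ` Q. \<forall>a\<in>A. \<delta>' x a \<in> g ` Q" using cl hg by (auto simp: \<delta>'_def)
    show "L = {w \<in> lists A. foldl \<delta>' (g s) w \<in> g ` (F \<inter> Q)}"
      unfolding L
    proof (intro Collect_cong conj_cong refl)
      fix w assume w: "w \<in> lists A"
      show "(foldl \<delta> s w \<in> F) = (foldl \<delta>' (g s) w \<in> g ` (F \<inter> Q))"
        using fw[OF s w] inQ[OF w] g by (auto simp: inj_on_eq_iff)
    qed
  qed
qed

lemma foldl_subset:
  "foldl (\<lambda>S a. {\<delta> x (a, b) | x b. x \<in> S \<and> b \<in> B}) S w =
   {foldl \<delta> x (zip w v) | x v. x \<in> S \<and> v \<in> lists B \<and> length v = length w}"
proof (induction w arbitrary: S)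
  case Nil then show ?case by auto
next
  case (Cons a w)
  show ?case
  proof (simp only: foldl_Cons Cons, intro set_eqI iffI)
    fix y assume "y \<in> {foldl \<delta> x (zip w v) |x v. x \<in> {\<delta> x (a, b) |x b. x \<in> S \<and> b \<in> B} \<and> v \<in> lists B \<and> length v = length w}"
    then obtain x0 b v where "y = foldl \<delta> (\<delta> x0 (a, b)) (zip w v)" "x0 \<in> S" "b \<in> B" "v \<in> lists B" "length v = length w" by blast
    then show "y \<in> {foldl \<delta> x (zip (a # w) v) |x v. x \<in> S \<and> v \<in> lists B \<and> length v = length (a # w)}"
      by (intro CollectI exI[of _ x0] exI[of _ "b # v"]) auto
  next
    fix y assume "y \<in> {foldl \<delta> x (zip (a # w) v) |x v. x \<in> S \<and> v \<in> lists B \<and> length v = length (a # w)}"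
    then obtain x0 v where y: "y = foldl \<delta> x0 (zip (a # w) v)" "x0 \<in> S" "v \<in> lists B" "length v = length (a # w)" by blast
    then obtain b v' where "v = b # v'" by (cases v) auto
    then show "y \<in> {foldl \<delta> x (zip w v) |x v. x \<in> {\<delta> x (a, b) |x b. x \<in> S \<and> b \<in> B} \<and> v \<in> lists B \<and> length v = length w}"
      using y by auto
  qed
qed

lemma foldl_pair: "foldl (\<lambda>(x, y) e. (f x e, g y e)) (x0, y0) xs = (foldl f x0 xs, foldl g y0 xs)"
  by (induction xs arbitrary: x0 y0) auto



definition cstep :: "int \<Rightarrow> int \<Rightarrow> (int \<times> int) option \<Rightarrow> int \<Rightarrow> (int \<times> int) option" where
  "cstep p q c d = (case c of None \<Rightarrow> None | Some (u, v) \<Rightarrow>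
      (if q dvd (u + p*v - d) then Some (v, (u + p*v - d) div q) else None))"

lemma cstep_None: "foldl (cstep p q) None d = None"
  by (induction d) (auto simp: cstep_def)

lemma cacc: assumes q0: "q \<noteq> 0"
  shows "foldl (cstep p q) (Some (u, v)) d = Some (0, 0) \<longleftrightarrow> tpoly p q dvd (Poly d - [:u + p*v, v:])"
proof (induction d arbitrary: u v)
  case Nil
  show ?case
  proof
    assume "foldl (cstep p q) (Some (u, v)) [] = Some (0, 0)" then show "tpoly p q dvd (Poly [] - [:u + p*v, v:])" by simp
  next
    assume "tpoly p q dvd (Poly [] - [:u + p*v, v:])"
    then have "tpoly p q dvd [:-(u + p*v), -v:]" by simp
    then show "foldl (cstep p q) (Some (u, v)) [] = Some (0, 0)" using tpoly_dvd_lin by fastforce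
  qed
next
  case (Cons a d)
  show ?case
  proof (cases "q dvd (u + p*v - a)")
    case True
    define g where "g = (u + p*v - a) div q"
    have qg: "u + p*v - a = q * g" using True g_def by simp
    have step: "foldl (cstep p q) (Some (u, v)) (a # d) = foldl (cstep p q) (Some (v, g)) d"
      using True by (simp add: cstep_def g_def)
    have id: "Poly (a # d) - [:u + p*v, v:] = [:0,1:] * (Poly d - [:v + p*g, g:]) + tpoly p q * [:g:]"
      using qg by (simp add: tpoly_def algebra_simps)
    have "tpoly p q dvd (Poly (a # d) - [:u + p*v, v:]) \<longleftrightarrow> tpoly p q dvd [:0,1:] * (Poly d - [:v + p*g, g:])"
      unfolding id by (rule dvd_add_left_iff) (rule dvd_triv_left)
    also have "\<dots> \<longleftrightarrow> tpoly p q dvd (Poly d - [:v + p*g, g:])"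
      using tpoly_dvd_x[OF _ q0] dvd_mult[of "tpoly p q" "Poly d - [:v + p*g, g:]" "[:0,1:]"] by blast
    finally show ?thesis using step Cons.IH by simp
  next
    case False
    have c1: "cstep p q (Some (u, v)) a = None" using False by (simp add: cstep_def)
    have step: "foldl (cstep p q) (Some (u, v)) (a # d) = None"
      by (simp only: foldl_Cons c1 cstep_None)
    have "\<not> tpoly p q dvd (Poly (a # d) - [:u + p*v, v:])"
    proof
      assume "tpoly p q dvd (Poly (a # d) - [:u + p*v, v:])"
      then have "q dvd coeff (Poly (a # d) - [:u + p*v, v:]) 0" by (rule tpoly_dvd_coeff0)
      then have "q dvd (a - (u + p*v))" by simp
      then have "q dvd (u + p*v - a)" using dvd_minus_iff[of q "a - (u+p*v)"] by simp
      then show False using False by blast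
    qed
    then show ?thesis using step by simp
  qed
qed

definition Bd :: "int \<Rightarrow> int" where "Bd q = 2 * \<bar>q\<bar> - 2"
definition CQ :: "int \<Rightarrow> (int \<times> int) option set" where
  "CQ q = Some ` ({-Bd q..Bd q} \<times> {-Bd q..Bd q}) \<union> {None}"

lemma CQ_finite: "finite (CQ q)" unfolding CQ_def by simp

lemma cstep_CQ: assumes hpq: "1 + \<bar>p\<bar> < \<bar>q\<bar>" and c: "c \<in> CQ q" and d: "\<bar>d\<bar> \<le> Bd q"
  shows "cstep p q c d \<in> CQ q"
proof (cases c)
  case None then show ?thesis by (simp add: cstep_def CQ_def)
next
  case (Some uv)
  then obtain u v where uv: "c = Some (u, v)" by (cases uv) auto
  have u: "\<bar>u\<bar> \<le> Bd q" and v: "\<bar>v\<bar> \<le> Bd q" using c uv unfolding CQ_def by auto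
  show ?thesis
  proof (cases "q dvd (u + p*v - d)")
    case False then show ?thesis using uv by (simp add: cstep_def CQ_def)
  next
    case True
    then obtain g where g: "u + p*v - d = q * g" by (auto simp: dvd_def)
    have q0: "q \<noteq> 0" using hpq by auto
    have gd: "(u + p*v - d) div q = g" using g q0 by simp
    have "\<bar>q\<bar> * \<bar>g\<bar> = \<bar>u + p*v - d\<bar>" using g by (simp add: abs_mult)
    also have "\<dots> \<le> \<bar>u\<bar> + \<bar>p\<bar>*\<bar>v\<bar> + \<bar>d\<bar>"
    proof -
      have t1: "\<bar>u + p*v - d\<bar> \<le> \<bar>u + p*v\<bar> + \<bar>d\<bar>" by (rule abs_triangle_ineq4)
      have t2: "\<bar>u + p*v\<bar> \<le> \<bar>u\<bar> + \<bar>p\<bar>*\<bar>v\<bar>" using abs_triangle_ineq[of u "p*v"] by (simp add: abs_mult)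
      show ?thesis using t1 t2 by linarith
    qed
    also have "\<dots> \<le> Bd q + \<bar>p\<bar>*Bd q + Bd q" using u v d by (intro add_mono mult_left_mono) auto
    also have "\<dots> = (\<bar>p\<bar> + 2) * Bd q" by (simp add: algebra_simps)
    also have "\<dots> \<le> \<bar>q\<bar> * Bd q" using hpq by (intro mult_right_mono) (auto simp: Bd_def)
    finally have "\<bar>g\<bar> \<le> Bd q" using hpq by (simp add: mult_le_cancel_left)
    then have "(v, g) \<in> {-Bd q..Bd q} \<times> {-Bd q..Bd q}" using v by (auto simp: abs_le_iff)
    then show ?thesis using uv True gd by (simp add: cstep_def CQ_def)
  qed
qed

definition fstep :: "nat \<Rightarrow> int \<times> int \<Rightarrow> nat" where
  "fstep f e = (if f = 0 then (if snd e < fst e then 1 else if fst e < snd e then 2 else 0) else f)"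

lemma fstep_stay: "f \<noteq> 0 \<Longrightarrow> foldl fstep f xs = f"
  by (induction xs) (auto simp: fstep_def)

lemma fstep_lex: "length v = length w \<Longrightarrow> (foldl fstep 0 (zip w v) = 1) \<longleftrightarrow> (v, w) \<in> lexord {(a, b). a < b}"
proof (induction w v rule: list_induct2')
  case (4 a w b v)
  then have lw: "length v = length w" by simp
  have z: "foldl fstep 0 (zip (a # w) (b # v)) = foldl fstep (fstep 0 (a, b)) (zip w v)" by simp
  show ?case
  proof (cases "b < a")
    case True
    then have "fstep 0 (a, b) = 1" by (simp add: fstep_def)
    then show ?thesis unfolding z using True fstep_stay[of 1] by simp
  next
    case False
    show ?thesis
    proof (cases "a < b")
      case True
      then have "fstep 0 (a, b) = 2" by (simp add: fstep_def)
      then show ?thesis unfolding z using True False fstep_stay[of 2] by simp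
    next
      case False2: False
      then have ab: "a = b" using False by simp
      then have "fstep 0 (a, b) = 0" by (simp add: fstep_def)
      then show ?thesis unfolding z using 4(1)[OF lw] ab by simp
    qed
  qed
qed auto

definition zstep :: "bool \<Rightarrow> int \<times> int \<Rightarrow> bool" where "zstep z e = (snd e = 0)"

lemma zstep_last: "length v = length w \<Longrightarrow> foldl zstep z (zip w v) = (if v = [] then z else last v = 0)"
  by (induction w v arbitrary: z rule: list_induct2') (auto simp: zstep_def)

lemma Poly_diff: "length v = length w \<Longrightarrow> Poly (map (\<lambda>e. fst e - snd e) (zip w v)) = Poly w - Poly v"
  by (induction w v rule: list_induct2') auto

definition nstep :: "int \<Rightarrow> int \<Rightarrow> (int \<times> int) option \<times> nat \<times> bool \<Rightarrow> int \<times> int \<Rightarrow> (int \<times> int) option \<times> nat \<times> bool" where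
  "nstep p q = (\<lambda>(x, y) e. ((\<lambda>c e. cstep p q c (fst e - snd e)) x e, (\<lambda>(x, y) e. (fstep x e, zstep y e)) y e))"

definition Acc :: "((int \<times> int) option \<times> nat \<times> bool) set" where
  "Acc = {(c, f, z). c = Some (0, 0) \<and> (f = 1 \<or> z)}"

lemma nstep_fold: "foldl (nstep p q) (c, f, z) xs = (foldl (cstep p q) c (map (\<lambda>e. fst e - snd e) xs), foldl fstep f xs, foldl zstep z xs)"
  unfolding nstep_def foldl_pair foldl_map by simp

lemma nacc: assumes q0: "q \<noteq> 0" and l: "length v = length w"
  shows "foldl (nstep p q) (Some (0, 0), 0, False) (zip w v) \<in> Acc \<longleftrightarrow>
    tpoly p q dvd (Poly w - Poly v) \<and> ((v \<noteq> [] \<and> last v = 0) \<or> (v, w) \<in> lexord {(a, b). a < b})"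
  unfolding nstep_fold Acc_def using cacc[OF q0, where u=0 and v=0 and d="map (\<lambda>e. fst e - snd e) (zip w v)" and p=p]
    Poly_diff[OF l] fstep_lex[OF l] zstep_last[OF l, of False] by auto

lemma Dom_char: assumes w: "w \<in> lists (Sigma q)" and q0: "q \<noteq> 0"
  shows "w \<in> Dom p q \<longleftrightarrow> \<not> (\<exists>v \<in> lists (Sigma q). length v = length w \<and> tpoly p q dvd (Poly w - Poly v) \<and>
     ((v \<noteq> [] \<and> last v = 0) \<or> (v, w) \<in> lexord {(a, b). a < b}))"
proof
  assume wD: "w \<in> Dom p q"
  show "\<not> (\<exists>v \<in> lists (Sigma q). length v = length w \<and> tpoly p q dvd (Poly w - Poly v) \<and>
     ((v \<noteq> [] \<and> last v = 0) \<or> (v, w) \<in> lexord {(a, b). a < b}))"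
  proof
    assume "\<exists>v \<in> lists (Sigma q). length v = length w \<and> tpoly p q dvd (Poly w - Poly v) \<and>
     ((v \<noteq> [] \<and> last v = 0) \<or> (v, w) \<in> lexord {(a, b). a < b})"
    then obtain v where v: "v \<in> lists (Sigma q)" "length v = length w" "tpoly p q dvd (Poly w - Poly v)"
      "(v \<noteq> [] \<and> last v = 0) \<or> (v, w) \<in> lexord {(a, b). a < b}" by blast
    have eq: "str_equiv p q v w" using v(3) unfolding str_equiv_def peq_def strpoly_def
      by (metis dvd_minus_iff minus_diff_eq)
    show False using v(4)
    proof
      assume lz: "v \<noteq> [] \<and> last v = 0"
      then have vb: "v = butlast v @ [0]" by (metis append_butlast_last_id)
      then have "Poly (butlast v) = Poly v" by (metis Poly_snoc_zero)
      then have "str_equiv p q (butlast v) w" using eq unfolding str_equiv_def strpoly_def by simp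
      moreover have "llex_less (butlast v) w" using lz v(2) unfolding llex_less_def by (cases v) auto
      moreover have "butlast v \<in> lists (Sigma q)" using v(1) in_set_butlastD by (fastforce simp: in_lists_conv_set)
      ultimately show False using wD unfolding Dom_def by blast
    next
      assume "(v, w) \<in> lexord {(a, b). a < b}"
      then have "llex_less v w" using v(2) unfolding llex_less_def by simp
      then show False using wD eq v(1) unfolding Dom_def by blast
    qed
  qed
next
  assume H: "\<not> (\<exists>v \<in> lists (Sigma q). length v = length w \<and> tpoly p q dvd (Poly w - Poly v) \<and>
     ((v \<noteq> [] \<and> last v = 0) \<or> (v, w) \<in> lexord {(a, b). a < b}))"
  show "w \<in> Dom p q" unfolding Dom_def
  proof (rule CollectI, rule conjI)
    show "w \<in> lists (Sigma q)" using w .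
  next
    show "\<not> (\<exists>v\<in>lists (Sigma q). llex_less v w \<and> str_equiv p q v w)"
    proof
    assume "\<exists>v\<in>lists (Sigma q). llex_less v w \<and> str_equiv p q v w"
    then obtain v where v: "v \<in> lists (Sigma q)" "llex_less v w" "str_equiv p q v w" by blast
    have dv: "tpoly p q dvd (Poly w - Poly v)" using v(3) unfolding str_equiv_def peq_def strpoly_def
      by (metis dvd_minus_iff minus_diff_eq)
    show False
    proof (cases "length v < length w")
      case True
      define v' where "v' = v @ replicate (length w - length v) 0"
      have "v' \<in> lists (Sigma q)" using v(1) q0 unfolding v'_def Sigma_def by auto
      moreover have "length v' = length w" using True unfolding v'_def by simp
      moreover have "Poly v' = Poly v" unfolding v'_def by simp
      moreover have "v' \<noteq> [] \<and> last v' = 0" using True unfolding v'_def by simp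
      ultimately show False using H dv by metis
    next
      case False
      then have "length v = length w" "(v, w) \<in> lexord {(a, b). a < b}" using v(2) unfolding llex_less_def by auto
      then show False using H dv v(1) by blast
    qed
    qed
  qed
qed

definition NQ :: "int \<Rightarrow> ((int \<times> int) option \<times> nat \<times> bool) set" where
  "NQ q = CQ q \<times> ({0, 1, 2} \<times> UNIV)"

definition DStep :: "int \<Rightarrow> int \<Rightarrow> ((int \<times> int) option \<times> nat \<times> bool) set \<Rightarrow> int \<Rightarrow> ((int \<times> int) option \<times> nat \<times> bool) set" where
  "DStep p q S a = {nstep p q x (a, b) | x b. x \<in> S \<and> b \<in> Sigma q}"

lemma Dom_auto: assumes hpq: "1 + \<bar>p\<bar> < \<bar>q\<bar>" and w: "w \<in> lists (Sigma q)"
  shows "w \<in> Dom p q \<longleftrightarrow> foldl (DStep p q) {(Some (0, 0), 0, False)} w \<inter> Acc = {}"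
proof -
  have q0: "q \<noteq> 0" using hpq by auto
  have S0: "foldl (DStep p q) {(Some (0, 0), 0, False)} w =
     {foldl (nstep p q) x (zip w v) | x v. x \<in> {(Some (0, 0), 0, False)} \<and> v \<in> lists (Sigma q) \<and> length v = length w}"
    unfolding DStep_def by (rule foldl_subset)
  have I: "(foldl (DStep p q) {(Some (0, 0), 0, False)} w \<inter> Acc = {}) \<longleftrightarrow>
      \<not> (\<exists>v\<in>lists (Sigma q). length v = length w \<and> foldl (nstep p q) (Some (0, 0), 0, False) (zip w v) \<in> Acc)"
    unfolding S0 by blast
  have N: "(\<exists>v\<in>lists (Sigma q). length v = length w \<and> foldl (nstep p q) (Some (0, 0), 0, False) (zip w v) \<in> Acc) \<longleftrightarrow>
     (\<exists>v \<in> lists (Sigma q). length v = length w \<and> tpoly p q dvd (Poly w - Poly v) \<and>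
     ((v \<noteq> [] \<and> last v = 0) \<or> (v, w) \<in> lexord {(a, b). a < b}))"
    using nacc[OF q0] by blast
  show ?thesis using Dom_char[OF w q0, where p=p] I N by simp
qed

lemma DStep_closed: assumes hpq: "1 + \<bar>p\<bar> < \<bar>q\<bar>" and S: "S \<subseteq> NQ q" and a: "a \<in> Sigma q"
  shows "DStep p q S a \<subseteq> NQ q"
proof
  fix y assume "y \<in> DStep p q S a"
  then obtain x b where xb: "y = nstep p q x (a, b)" "x \<in> S" "b \<in> Sigma q" unfolding DStep_def by blast
  obtain c f z where x: "x = (c, f, z)" by (cases x) auto
  have c: "c \<in> CQ q" and f: "f \<in> {0,1,2}" using xb(2) S x unfolding NQ_def by auto
  have "\<bar>a - b\<bar> \<le> Bd q" using a xb(3) unfolding Sigma_def Bd_def by auto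
  then have "cstep p q c (a - b) \<in> CQ q" using cstep_CQ[OF hpq c] by simp
  moreover have "fstep f (a, b) \<in> {0,1,2}" using f by (auto simp: fstep_def)
  ultimately show "y \<in> NQ q" using xb(1) x unfolding nstep_def NQ_def by simp
qed

lemma NQ_finite: "finite (NQ q)" unfolding NQ_def using CQ_finite by simp

lemma init_NQ: "1 + \<bar>p\<bar> < \<bar>q\<bar> \<Longrightarrow> (Some (0, 0), 0, False) \<in> NQ q"
  unfolding NQ_def CQ_def Bd_def by auto



definition estep :: "int \<Rightarrow> int option \<Rightarrow> int \<Rightarrow> int option" where
  "estep s c a = (case c of None \<Rightarrow> None | Some c \<Rightarrow> if s dvd (c + a) then Some ((c + a) div s) else None)"

lemma estep_None: "foldl (estep s) None d = None" by (induction d) (auto simp: estep_def)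

lemma eacc: assumes s0: "s \<noteq> 0"
  shows "foldl (estep s) (Some c) d = Some 0 \<longleftrightarrow> c + poly (Poly d) s = 0"
proof (induction d arbitrary: c)
  case Nil then show ?case by simp
next
  case (Cons a d)
  show ?case
  proof (cases "s dvd (c + a)")
    case True
    then obtain g where g: "c + a = s * g" by (auto simp: dvd_def)
    have "estep s (Some c) a = Some g" using True g s0 by (simp add: estep_def)
    then have "foldl (estep s) (Some c) (a # d) = foldl (estep s) (Some g) d" by simp
    moreover have "c + poly (Poly (a # d)) s = s * (g + poly (Poly d) s)" using g by (simp add: algebra_simps)
    ultimately show ?thesis using Cons.IH s0 by simp
  next
    case False
    have "c + poly (Poly (a # d)) s \<noteq> 0"
    proof
      assume "c + poly (Poly (a # d)) s = 0"
      then have "c + a = s * (- poly (Poly d) s)" by (simp add: algebra_simps)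
      then show False using False by simp
    qed
    moreover have "estep s (Some c) a = None" using False by (simp add: estep_def)
    ultimately show ?thesis by (simp only: foldl_Cons estep_None) simp
  qed
qed

definition EQs :: "int \<Rightarrow> int option set" where "EQs q = Some ` {-\<bar>q\<bar>..\<bar>q\<bar>} \<union> {None}"

lemma estep_closed: assumes s2: "\<bar>s\<bar> \<ge> 2" and c: "c \<in> EQs q" and a: "a \<in> Sigma q"
  shows "estep s c a \<in> EQs q"
proof (cases c)
  case None then show ?thesis by (simp add: estep_def EQs_def)
next
  case (Some c0)
  show ?thesis
  proof (cases "s dvd (c0 + a)")
    case False then show ?thesis using Some by (simp add: estep_def EQs_def)
  next
    case True
    then obtain g where g: "c0 + a = s * g" by (auto simp: dvd_def)
    have gd: "(c0 + a) div s = g" using g s2 by auto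
    have "\<bar>s\<bar> * \<bar>g\<bar> = \<bar>c0 + a\<bar>" using g by (simp add: abs_mult)
    also have "\<dots> \<le> 2 * \<bar>q\<bar> - 1" using c Some a unfolding EQs_def Sigma_def by auto
    finally have h: "\<bar>s\<bar> * \<bar>g\<bar> \<le> 2 * \<bar>q\<bar> - 1" .
    have "2 * \<bar>g\<bar> \<le> \<bar>s\<bar> * \<bar>g\<bar>" using s2 by (intro mult_right_mono) auto
    then have "\<bar>g\<bar> \<le> \<bar>q\<bar>" using h by linarith
    then have "g \<in> {-\<bar>q\<bar>..\<bar>q\<bar>}" by (auto simp: abs_le_iff)
    then show ?thesis using Some True gd by (simp add: estep_def EQs_def)
  qed
qed

definition mstep :: "int \<Rightarrow> int \<Rightarrow> int \<times> int \<Rightarrow> int \<Rightarrow> int \<times> int" where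
  "mstep r M xs a = ((fst xs * r) mod M, (snd xs + a * fst xs) mod M)"

lemma mfold: "foldl (mstep r M) (1 mod M, 0) w = (r ^ length w mod M, poly (Poly w) r mod M)"
proof (induction w rule: rev_induct)
  case Nil then show ?case by simp
next
  case (snoc a w)
  have e: "foldl (mstep r M) (1 mod M, 0) (w @ [a]) = mstep r M (r ^ length w mod M, poly (Poly w) r mod M) a"
    using snoc by simp
  have e1: "(r ^ length w mod M * r) mod M = r ^ length (w @ [a]) mod M"
    by (metis mod_mult_left_eq power_Suc2 length_append_singleton)
  have e2: "(poly (Poly w) r mod M + a * (r ^ length w mod M)) mod M = (poly (Poly w) r + a * r ^ length w) mod M"
    by (metis mod_add_left_eq mod_add_right_eq mod_mult_right_eq)
  have e3: "poly (Poly (w @ [a])) r = poly (Poly w) r + a * r ^ length w"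
    by (simp add: Poly_snoc poly_monom)
  show ?case unfolding e unfolding mstep_def fst_conv snd_conv e1 e2 e3 ..
qed

lemma mstep_closed: "M > 0 \<Longrightarrow> mstep r M xs a \<in> {0..<M} \<times> {0..<M}"
  by (simp add: mstep_def)

lemma peq_poly: "peq p q f g \<Longrightarrow> x^2 + p*x - q = 0 \<Longrightarrow> poly f x = poly g x"
proof -
  assume a: "peq p q f g" "x^2 + p*x - q = 0"
  then obtain h where h: "f = g + tpoly p q * h" unfolding peq_iff by blast
  have "poly (tpoly p q) x = x^2 + p*x - q" by (simp add: tpoly_def algebra_simps power2_eq_square)
  then have "poly (tpoly p q) x = 0" using a(2) by simp
  then show ?thesis using h by simp
qed

lemma eig_div: assumes z1: "z1 \<noteq> 0" and D: "q*z1^2 - z2^2 + p*z1*z2 = (0::int)" shows "z1 dvd z2"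
proof -
  have g0: "gcd z1 z2 \<noteq> 0" using z1 by simp
  obtain a b where ab: "z1 = a * gcd z1 z2" "z2 = b * gcd z1 z2" "coprime a b"
    using gcd_coprime_exists[OF g0] by blast
  obtain g where g: "z1 = a * g" "z2 = b * g" "g \<noteq> 0" using ab g0 by blast
  have "q*z1^2 - z2^2 + p*z1*z2 = g^2 * (q*a^2 - b^2 + p*a*b)"
    unfolding g(1) g(2) by (simp add: algebra_simps power2_eq_square)
  then have "q*a^2 - b^2 + p*a*b = 0" using D g(3) by simp
  then have "b^2 = a * (q*a + p*b)" by (simp add: algebra_simps power2_eq_square)
  then have "a dvd b^2" by simp
  moreover have "coprime a (b^2)" using ab(3) by simp
  ultimately have "is_unit a" using coprime_absorb_left[of a "b^2"] by blast
  then have "z1 dvd g" unfolding g(1) by (simp add: unit_dvd_iff)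
  then show ?thesis unfolding g(2) by (rule dvd_mult)
qed

lemma eigen_reg:
  assumes hpq: "1 + \<bar>p\<bar> < \<bar>q\<bar>" and gg: "gcd p q = 1" and z1: "z1 \<noteq> 0"
    and D: "q*z1^2 - z2^2 + p*z1*z2 = 0"
  shows "regular_lang (Sigma q) (psi_preimage p q (cyc (z1, z2)))"
proof -
  have q0: "q \<noteq> 0" using hpq by auto
  obtain l where l: "z2 = l * z1" using eig_div[OF z1 D] by (auto simp: dvd_def mult.commute)
  define s where "s = -l"
  have "z1^2 * (q - l^2 + p*l) = 0" using D l by (simp add: algebra_simps power2_eq_square)
  then have ql: "q - l^2 + p*l = 0" using z1 by simp
  have sroot: "s^2 + p*s - q = 0" using ql unfolding s_def by (simp add: algebra_simps power2_eq_square)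
  define r where "r = -p - s"
  have rroot: "r^2 + p*r - q = 0" using sroot unfolding r_def by (simp add: algebra_simps power2_eq_square)
  have qs: "q = s * (s + p)" using sroot by (simp add: algebra_simps power2_eq_square)
  have s2: "\<bar>s\<bar> \<ge> 2"
  proof (rule ccontr)
    assume "\<not> \<bar>s\<bar> \<ge> 2"
    then have "s = 0 \<or> s = 1 \<or> s = -1" by auto
    then show False using qs hpq by auto
  qed
  have rs: "r - s \<noteq> 0"
  proof
    assume "r - s = 0"
    then have ps: "p = s * (-2)" unfolding r_def by simp
    have "s dvd p" unfolding ps by (rule dvd_triv_left)
    moreover have "s dvd q" unfolding qs by (rule dvd_triv_left)
    ultimately have "s dvd gcd p q" by (rule gcd_greatest)
    then have "s dvd 1" using gg by simp
    then have "\<bar>s\<bar> = 1" by (simp add: zdvd1_eq)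
    then show False using s2 by simp
  qed
  define M where "M = \<bar>z1 * (r - s)\<bar>"
  have M0: "M > 0" using z1 rs unfolding M_def by simp
  have mem: "w \<in> psi_preimage p q (cyc (z1, z2)) \<longleftrightarrow>
        w \<in> Dom p q \<and> poly (Poly w) s = 0 \<and> poly (Poly w) r mod M = 0" if w: "w \<in> lists (Sigma q)" for w
  proof -
    obtain h1 h2 where hh: "psi p q w = (h1, h2)" by (cases "psi p q w") auto
    have pe: "peq p q (Poly w) [:h2, h1:]" using cls_peq[of p q "Poly w"] hh psi_cls[of p q w] by simp
    have fs: "poly (Poly w) s = h2 + h1 * s" using peq_poly[OF pe sroot] by (simp add: algebra_simps)
    have fr: "poly (Poly w) r = h2 + h1 * r" using peq_poly[OF pe rroot] by (simp add: algebra_simps)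
    have "(h1, h2) \<in> cyc (z1, z2) \<longleftrightarrow> poly (Poly w) s = 0 \<and> poly (Poly w) r mod M = 0"
    proof
      assume "(h1, h2) \<in> cyc (z1, z2)"
      then obtain k where k: "h1 = k * z1" "h2 = k * z2" unfolding cyc_def zscale_def by auto
      have "poly (Poly w) s = 0" using fs k l unfolding s_def by (simp add: algebra_simps)
      moreover have "poly (Poly w) r = k * (z1 * (r - s))" using fr k l unfolding s_def by (simp add: algebra_simps)
      ultimately show "poly (Poly w) s = 0 \<and> poly (Poly w) r mod M = 0" unfolding M_def by simp
    next
      assume a: "poly (Poly w) s = 0 \<and> poly (Poly w) r mod M = 0"
      then have h2: "h2 = - h1 * s" using fs by (simp add: algebra_simps)
      have "M dvd poly (Poly w) r" using a by (simp add: mod_eq_0_iff_dvd)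
      then have "z1 * (r - s) dvd h1 * (r - s)" using fr h2 unfolding M_def by (simp add: algebra_simps)
      then have "z1 dvd h1" using rs by simp
      then obtain k where k: "h1 = k * z1" by (auto simp: dvd_def mult.commute)
      have "h2 = k * z2" using h2 k l unfolding s_def by simp
      then show "(h1, h2) \<in> cyc (z1, z2)" using k unfolding cyc_def zscale_def by auto
    qed
    then show ?thesis unfolding psi_preimage_def using hh by auto
  qed
  define st where "st = ({(Some (0::int, 0::int), 0::nat, False)}, Some (0::int), (1 mod M, 0::int))"
  define \<delta> where "\<delta> = (\<lambda>(x, y) a. (DStep p q x a, (\<lambda>(x, y) a. (estep s x a, mstep r M y a)) y a))"
  define Q where "Q = Pow (NQ q) \<times> EQs q \<times> ({0..<M} \<times> {0..<M})"
  define Fs where "Fs = {(S, e, m). S \<inter> Acc = {} \<and> e = Some (0::int) \<and> snd m = (0::int) \<and> fst m = fst (m::int \<times> int)}"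
  have fd: "foldl \<delta> st w = (foldl (DStep p q) {(Some (0, 0), 0, False)} w, foldl (estep s) (Some 0) w, foldl (mstep r M) (1 mod M, 0) w)" for w
    unfolding \<delta>_def st_def foldl_pair by simp
  show ?thesis
  proof (rule reg_intro[of Q st _ \<delta> _ Fs])
    show "finite Q" unfolding Q_def EQs_def using NQ_finite by simp
    show "st \<in> Q" unfolding st_def Q_def EQs_def using init_NQ[OF hpq] M0 q0 by auto
    show "\<forall>x\<in>Q. \<forall>a\<in>Sigma q. \<delta> x a \<in> Q"
      unfolding Q_def \<delta>_def using DStep_closed[OF hpq] estep_closed[OF s2] mstep_closed[OF M0] by auto
    show "psi_preimage p q (cyc (z1, z2)) = {w \<in> lists (Sigma q). foldl \<delta> st w \<in> Fs}"
    proof (intro set_eqI iffI)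
      fix w assume w: "w \<in> psi_preimage p q (cyc (z1, z2))"
      then have wl: "w \<in> lists (Sigma q)" unfolding psi_preimage_def using Dom_lists by auto
      then show "w \<in> {w \<in> lists (Sigma q). foldl \<delta> st w \<in> Fs}"
        using w mem[OF wl] Dom_auto[OF hpq wl] eacc[of s 0 w] s2 unfolding fd Fs_def mfold by auto
    next
      fix w assume w: "w \<in> {w \<in> lists (Sigma q). foldl \<delta> st w \<in> Fs}"
      then have wl: "w \<in> lists (Sigma q)" by auto
      then show "w \<in> psi_preimage p q (cyc (z1, z2))"
        using w mem[OF wl] Dom_auto[OF hpq wl] eacc[of s 0 w] s2 unfolding fd Fs_def mfold by auto
    qed
  qed
qed

lemma fold_one: "foldl (\<lambda>x a. 1::nat) x w = (if w = [] then x else 1)"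
  by (induction w arbitrary: x) auto

lemma zero_reg: "regular_lang (Sigma q) (psi_preimage p q (cyc (0, 0)))"
proof -
  have L: "psi_preimage p q (cyc (0, 0)) = {w \<in> lists (Sigma q). foldl (\<lambda>x a. 1::nat) 0 w \<in> {0}}"
  proof (intro set_eqI iffI)
    fix w assume "w \<in> psi_preimage p q (cyc (0, 0))"
    then have w: "w \<in> Dom p q" "psi p q w = (0, 0)" unfolding psi_preimage_def cyc_def zscale_def by auto
    have "peq p q (Poly w) [:0, 0:]" using cls_peq[of p q "Poly w"] w(2) psi_cls[of p q w] by simp
    then have "w = []" using Dom_zero[OF w(1)] by simp
    then show "w \<in> {w \<in> lists (Sigma q). foldl (\<lambda>x a. 1::nat) 0 w \<in> {0}}" by simp
  next
    fix w assume a: "w \<in> {w \<in> lists (Sigma q). foldl (\<lambda>x a. 1::nat) 0 w \<in> {0}}"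
    then have "w = []" using fold_one[of 0 w] by (cases "w = []") auto
    then show "w \<in> psi_preimage p q (cyc (0, 0))"
      using Nil_Dom psi_eq[of p q "[]" 0 0] unfolding psi_preimage_def cyc_def zscale_def by auto
  qed
  show ?thesis by (rule reg_intro[of "{0, 1::nat}" 0 "Sigma q" "\<lambda>x a. 1" _ "{0}"]) (auto simp: L)
qed


theorem mainTheorem6:
  fixes p q :: int
  assumes "1 + \<bar>p\<bar> < \<bar>q\<bar>" and "gcd p q = 1"
  shows "(\<forall>m::int. m \<noteq> 0 \<longrightarrow>
            \<not> regular_lang (Sigma q) (psi_preimage p q (cyc (zscale m xi))) \<and>
            \<not> regular_lang (Sigma q) (psi_preimage p q (cyc (zscale m eta))))
       \<and> (\<forall>(\<zeta>::int \<times> int) (m::int). m > 1 \<longrightarrow>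
            \<not> regular_lang (Sigma q) (psi_preimage p q (cyc \<zeta>)) \<longrightarrow>
            \<not> regular_lang (Sigma q) (psi_preimage p q (cyc (zscale m \<zeta>))))"
proof (intro conjI allI impI)
  fix m :: int assume m: "m \<noteq> 0"
  have q0: "q \<noteq> 0" using assms by auto
  show "\<not> regular_lang (Sigma q) (psi_preimage p q (cyc (zscale m xi)))"
    using nonreg[OF assms, of 0 m] m unfolding zscale_def xi_def by simp
  show "\<not> regular_lang (Sigma q) (psi_preimage p q (cyc (zscale m eta)))"
    using nonreg[OF assms, of m 0] m q0 unfolding zscale_def eta_def by simp
next
  fix \<zeta> :: "int \<times> int" and m :: int
  assume m: "m > 1" and nr: "\<not> regular_lang (Sigma q) (psi_preimage p q (cyc \<zeta>))"
  obtain z1 z2 where z: "\<zeta> = (z1, z2)" by (cases \<zeta>) auto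
  show "\<not> regular_lang (Sigma q) (psi_preimage p q (cyc (zscale m \<zeta>)))"
  proof (cases "q*z1^2 - z2^2 + p*z1*z2 = 0")
    case True
    show ?thesis
    proof (cases "z1 = 0")
      case True2: True
      then have "z2 = 0" using True by simp
      then show ?thesis using nr zero_reg z True2 by simp
    next
      case False
      then show ?thesis using nr eigen_reg[OF assms False True] z by simp
    qed
  next
    case False
    have "q*(m*z1)^2 - (m*z2)^2 + p*(m*z1)*(m*z2) = m^2 * (q*z1^2 - z2^2 + p*z1*z2)"
      by (simp add: algebra_simps power2_eq_square)
    then have "q*(m*z1)^2 - (m*z2)^2 + p*(m*z1)*(m*z2) \<noteq> 0" using False m by simp
    then show ?thesis using nonreg[OF assms] z unfolding zscale_def by simp
  qed
qed

end
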